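(* Let $k,\ell$ be positive integers. For integers $0\le j\le k$ define $$\left\langle \begin{matrix} k \\ j \end{matrix} \right\rangle (x, s, q, \ell) = \frac{\prod_{i=1}^k f(i\ell, x, s)}{\prod_{i=1}^j f(i\ell, x, q^{(j-i)\ell}s) \prod_{i=1}^{k-j} f(i\ell, x, q^{j\ell}s)}.$$ Then for all $n\in\mathbb{Z}$, $$\sum_{j=0}^{k+1} (-1)^{j+\ell \binom{j}{2}} \left( q^{\frac{(4j+1)\ell-3}{6}} s \right)^{\ell\binom{j}{2}} \left\langle \begin{matrix} k+1 \\ j \end{matrix} \right\rangle (x, s, q, \ell)\, f(n - j\ell, x, q^{j\ell} s)^k = 0.$$
   Context: Let $x,s,q$ be indeterminates; all quantities live in the field of rational functions in $x,s,q$. The Carlitz $q$-Fibonacci polynomials $f(n,x,s)$ are defined by $f(0,x,s)=0$, $f(1,x,s)=1$ and $f(n, x, s) = x f(n-1, x, s) + q^{n-2} s f(n-2, x, s)$; this recurrence is required to hold for all $n\in\mathbb{Z}$, which uniquely extends $f(n,x,s)$ to negative $n$. Here $f(n,x,q^a s)$ means $f(n,x,s)$ with $s$ replaced by $q^a s$. *)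

theory Defs
  imports "HOL-Computational_Algebra.Polynomial" "HOL-Computational_Algebra.Fraction_Field"
begin

text \<open>The field of rational functions Q(x,s,q) = Frac(Z[x,s,q]), realised as the
fraction field of nested univariate polynomials: the outermost variable is q,
the middle one s, the innermost one x.\<close>

type_synonym rf = "int poly poly poly fract"

definition qv :: rf where "qv = Fract [:0, 1:] 1"
definition sv :: rf where "sv = Fract [:[:0, 1:]:] 1"
definition xv :: rf where "xv = Fract [:[:[:0, 1:]:]:] 1"

definition carlitz_f :: "'a::field \<Rightarrow> int \<Rightarrow> 'a \<Rightarrow> 'a \<Rightarrow> 'a" where
  "carlitz_f q n x s =
     (THE g. g 0 = 0 \<and> g 1 = 1 \<and>
        (\<forall>m::int. g m = x * g (m - 1) + q powi (m - 2) * s * g (m - 2))) n"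

definition carlitz_bracket :: "'a::field \<Rightarrow> nat \<Rightarrow> nat \<Rightarrow> 'a \<Rightarrow> 'a \<Rightarrow> nat \<Rightarrow> 'a" where
  "carlitz_bracket q k j x s l =
     (\<Prod>i=1..k. carlitz_f q (int (i * l)) x s) /
     ((\<Prod>i=1..j. carlitz_f q (int (i * l)) x (q ^ ((j - i) * l) * s)) *
      (\<Prod>i=1..k - j. carlitz_f q (int (i * l)) x (q ^ (j * l) * s)))"

end

theory Submission
  imports Defs
begin


definition rec_sol :: "'a::field \<Rightarrow> 'a \<Rightarrow> 'a \<Rightarrow> (int \<Rightarrow> 'a) \<Rightarrow> bool" where
  "rec_sol q x s g \<longleftrightarrow> (\<forall>m::int. g m = x * g (m - 1) + q powi (m - 2) * s * g (m - 2))"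

lemma rec_solD: "rec_sol q x s g \<Longrightarrow> g m = x * g (m - 1) + q powi (m - 2) * s * g (m - 2)"
  unfolding rec_sol_def by (erule allE)

lemma rec_sol_uniq:
  fixes q x s :: "'a::field"
  assumes q: "q \<noteq> 0" and s: "s \<noteq> 0" and g: "rec_sol q x s g" and h: "rec_sol q x s h"
    and e0: "g 0 = h 0" and e1: "g 1 = h 1"
  shows "g = h"
proof -
  have fw: "g (int n) = h (int n) \<and> g (int n + 1) = h (int n + 1)" for n
  proof (induction n)
    case 0 then show ?case using e0 e1 by simp
  next
    case (Suc n)
    have "g (int n + 2) = h (int n + 2)"
      using rec_solD[OF g, of "int n + 2"] rec_solD[OF h, of "int n + 2"] Suc
      by (simp add: add.commute)
    then show ?case using Suc by (simp add: add.commute add.left_commute)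
  qed
  have bw: "g (- int n) = h (- int n) \<and> g (1 - int n) = h (1 - int n)" for n
  proof (induction n)
    case 0 then show ?case using e0 e1 by simp
  next
    case (Suc n)
    have nz: "q powi (- int n - 1) * s \<noteq> 0" using q s by simp
    have i1: "1 - int n - 1 = - int n" and i2: "1 - int n - 2 = - int n - 1" by simp_all
    have A: "g (1 - int n) = x * g (- int n) + q powi (- int n - 1) * s * g (- int n - 1)"
      using rec_solD[OF g, of "1 - int n", unfolded i1 i2] .
    have B: "h (1 - int n) = x * h (- int n) + q powi (- int n - 1) * s * h (- int n - 1)"
      using rec_solD[OF h, of "1 - int n", unfolded i1 i2] .
    from A B Suc nz have "g (- int n - 1) = h (- int n - 1)" by simp
    moreover have j1: "- int (Suc n) = - int n - 1" and j2: "1 - int (Suc n) = - int n" by simp_all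
    ultimately show ?case using Suc unfolding j1 j2 by blast
  qed
  show ?thesis
  proof
    fix i :: int
    show "g i = h i"
    proof (cases "i \<ge> 0")
      case True then show ?thesis using fw[of "nat i"] by simp
    next
      case False then show ?thesis using bw[of "nat (-i)"] by simp
    qed
  qed
qed

fun fwd :: "'a::field \<Rightarrow> 'a \<Rightarrow> 'a \<Rightarrow> 'a \<Rightarrow> 'a \<Rightarrow> nat \<Rightarrow> 'a \<times> 'a" where
  "fwd q x s a b 0 = (a, b)"
| "fwd q x s a b (Suc n) = (snd (fwd q x s a b n), x * snd (fwd q x s a b n) + q ^ n * s * fst (fwd q x s a b n))"

fun bwd :: "'a::field \<Rightarrow> 'a \<Rightarrow> 'a \<Rightarrow> 'a \<Rightarrow> 'a \<Rightarrow> nat \<Rightarrow> 'a \<times> 'a" where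
  "bwd q x s a b 0 = (a, b)"
| "bwd q x s a b (Suc n) = ((snd (bwd q x s a b n) - x * fst (bwd q x s a b n)) / (q powi (- int n - 1) * s), fst (bwd q x s a b n))"

definition sol :: "'a::field \<Rightarrow> 'a \<Rightarrow> 'a \<Rightarrow> 'a \<Rightarrow> 'a \<Rightarrow> int \<Rightarrow> 'a" where
  "sol q x s a b n = (if 0 \<le> n then fst (fwd q x s a b (nat n)) else fst (bwd q x s a b (nat (- n))))"

lemma sol_neg: "sol q x s a b (- int n) = fst (bwd q x s a b n)"
proof (cases n)
  case 0 then show ?thesis by (simp add: sol_def)
next
  case (Suc m)
  then have nn: "\<not> 0 \<le> - int n" by simp
  show ?thesis unfolding sol_def if_not_P[OF nn] minus_minus nat_int by (rule refl)
qed

lemma sol_one_minus: "sol q x s a b (1 - int n) = snd (bwd q x s a b n)"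
proof (cases n)
  case 0 then show ?thesis by (simp add: sol_def)
next
  case (Suc m)
  then have "1 - int n = - int m" by simp
  then show ?thesis using Suc sol_neg[of q x s a b m] by simp
qed

lemma sol_pos: "sol q x s a b (int n) = fst (fwd q x s a b n)"
  by (simp add: sol_def)

lemma sol_rec:
  fixes q x s :: "'a::field"
  assumes q: "q \<noteq> 0" and s: "s \<noteq> 0"
  shows "rec_sol q x s (sol q x s a b)"
  unfolding rec_sol_def
proof
  fix m :: int
  show "sol q x s a b m = x * sol q x s a b (m - 1) + q powi (m - 2) * s * sol q x s a b (m - 2)"
  proof (cases "m \<ge> 2")
    case True
    define n where "n = nat (m - 2)"
    have m: "m = int n + 2" using True n_def by simp
    have "sol q x s a b (int (Suc (Suc n))) = x * sol q x s a b (int (Suc n)) + q ^ n * s * sol q x s a b (int n)"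
      unfolding sol_pos by simp
    then show ?thesis using m by (simp add: add.commute add.left_commute)
  next
    case False
    define n where "n = nat (1 - m)"
    have m: "m = 1 - int n" using False n_def by simp
    have nz: "q powi (- int n - 1) * s \<noteq> 0" using q s by simp
    have e1: "sol q x s a b (m - 1) = fst (bwd q x s a b n)" using m sol_neg[of q x s a b n] by simp
    have e2: "sol q x s a b (m - 2) = fst (bwd q x s a b (Suc n))" using m sol_neg[of q x s a b "Suc n"] by simp
    have e0: "sol q x s a b m = snd (bwd q x s a b n)" using m sol_one_minus by simp
    have mm: "m - 2 = - int n - 1" using m by simp
    have H: "q powi (- int n - 1) * s * fst (bwd q x s a b (Suc n)) = snd (bwd q x s a b n) - x * fst (bwd q x s a b n)"
      using nz by simp
    show ?thesis unfolding e0 e1 e2 unfolding mm H by simp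
  qed
qed

lemma sol_01: "sol q x s a b 0 = a" "sol q x s a b 1 = b"
  by (simp_all add: sol_def)

lemma carlitz_f_eq_sol:
  fixes q x s :: "'a::field"
  assumes q: "q \<noteq> 0" and s: "s \<noteq> 0"
  shows "carlitz_f q n x s = sol q x s 0 1 n"
proof -
  have "(THE g. g 0 = 0 \<and> g 1 = 1 \<and>
        (\<forall>m::int. g m = x * g (m - 1) + q powi (m - 2) * s * g (m - 2))) = sol q x s 0 1"
  proof (rule the_equality)
    show "sol q x s 0 1 0 = 0 \<and> sol q x s 0 1 1 = 1 \<and>
        (\<forall>m::int. sol q x s 0 1 m = x * sol q x s 0 1 (m - 1) + q powi (m - 2) * s * sol q x s 0 1 (m - 2))"
    proof (intro conjI)
      show "sol q x s 0 1 0 = 0" by (rule sol_01(1))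
      show "sol q x s 0 1 1 = 1" by (rule sol_01(2))
      show "\<forall>m::int. sol q x s 0 1 m = x * sol q x s 0 1 (m - 1) + q powi (m - 2) * s * sol q x s 0 1 (m - 2)"
        using sol_rec[OF q s] unfolding rec_sol_def .
    qed
  next
    fix g assume H: "g 0 = 0 \<and> g 1 = 1 \<and> (\<forall>m::int. g m = x * g (m - 1) + q powi (m - 2) * s * g (m - 2))"
    have R: "rec_sol q x s g" unfolding rec_sol_def using H by blast
    show "g = sol q x s 0 1"
    proof (rule rec_sol_uniq[OF q s R sol_rec[OF q s]])
      show "g 0 = sol q x s 0 1 0" unfolding sol_01 using H by blast
      show "g 1 = sol q x s 0 1 1" unfolding sol_01 using H by blast
    qed
  qed
  then show ?thesis unfolding carlitz_f_def by simp
qed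

lemma carlitz_rec:
  fixes q x s :: "'a::field"
  assumes q: "q \<noteq> 0" and s: "s \<noteq> 0"
  shows "rec_sol q x s (\<lambda>n. carlitz_f q n x s)"
  using sol_rec[OF q s] carlitz_f_eq_sol[OF q s] by simp

lemma carlitz_01:
  fixes q x s :: "'a::field"
  assumes q: "q \<noteq> 0" and s: "s \<noteq> 0"
  shows "carlitz_f q 0 x s = 0" "carlitz_f q 1 x s = 1"
  using carlitz_f_eq_sol[OF q s] by (simp_all add: sol_01)

lemma rec_sol_lin:
  assumes "rec_sol q x s g" "rec_sol q x s h"
  shows "rec_sol q x s (\<lambda>n. a * g n + b * h n)"
  unfolding rec_sol_def
proof
  fix m
  have G: "g m = x * g (m - 1) + q powi (m - 2) * s * g (m - 2)" by (rule rec_solD[OF assms(1)])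
  have H: "h m = x * h (m - 1) + q powi (m - 2) * s * h (m - 2)" by (rule rec_solD[OF assms(2)])
  show "a * g m + b * h m = x * (a * g (m - 1) + b * h (m - 1)) + q powi (m - 2) * s * (a * g (m - 2) + b * h (m - 2))"
    unfolding G H by (simp add: algebra_simps)
qed

lemma rec_sol_basis:
  fixes q x s :: "'a::field"
  assumes q: "q \<noteq> 0" and s: "s \<noteq> 0" and g: "rec_sol q x s g"
  shows "g n = g 1 * carlitz_f q n x s + g 0 * sol q x s 1 0 n"
proof -
  have "g = (\<lambda>n. g 1 * carlitz_f q n x s + g 0 * sol q x s 1 0 n)"
    by (rule rec_sol_uniq[OF q s g rec_sol_lin[OF carlitz_rec[OF q s] sol_rec[OF q s]]])
       (simp_all add: carlitz_01[OF q s] sol_01)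
  then show ?thesis by (rule fun_cong)
qed

lemma rec_sol_shift:
  fixes q x s :: "'a::field"
  assumes q: "q \<noteq> 0" and g: "rec_sol q x (q ^ a * s) g"
  shows "rec_sol q x s (\<lambda>n. g (n - int a))"
  unfolding rec_sol_def
proof
  fix m
  have "q powi (m - int a - 2) * (q ^ a * s) = q powi (m - 2) * s"
  proof -
    have "q powi (m - 2) = q powi (m - int a - 2) * q powi (int a)"
      using power_int_add[of q "m - int a - 2" "int a"] q by simp
    then show ?thesis by simp
  qed
  note e = this
  have i1: "m - int a - 1 = m - 1 - int a" and i2: "m - int a - 2 = m - 2 - int a" by simp_all
  have "g (m - int a) = x * g (m - int a - 1) + q powi (m - int a - 2) * (q ^ a * s) * g (m - int a - 2)"
    by (rule rec_solD[OF g])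
  from this[unfolded e, unfolded i1 i2]
  show "g (m - int a) = x * g (m - 1 - int a) + q powi (m - 2) * s * g (m - 2 - int a)" .
qed

lemma cas:
  fixes q x s :: "'a::field"
  assumes g: "rec_sol q x s g" and h: "rec_sol q x s h"
  shows "g (int N) * h (int N + 1) - g (int N + 1) * h (int N) = (- s) ^ N * q ^ (N choose 2) * (g 0 * h 1 - g 1 * h 0)"
proof (induction N)
  case 0 then show ?case by (simp add: binomial_eq_0)
next
  case (Suc N)
  have G: "g (int N + 2) = x * g (int N + 1) + q ^ N * s * g (int N)"
    using rec_solD[OF g, of "int N + 2"] by (simp add: add.commute)
  have H: "h (int N + 2) = x * h (int N + 1) + q ^ N * s * h (int N)"
    using rec_solD[OF h, of "int N + 2"] by (simp add: add.commute)
  have c: "Suc N choose 2 = (N choose 2) + N"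
    by (simp add: choose_reduce_nat numeral_2_eq_2)
  have "g (int (Suc N)) * h (int (Suc N) + 1) - g (int (Suc N) + 1) * h (int (Suc N))
      = g (int N + 1) * h (int N + 2) - g (int N + 2) * h (int N + 1)" by (simp add: add.commute add.left_commute)
  also have "\<dots> = - (q ^ N * s) * (g (int N) * h (int N + 1) - g (int N + 1) * h (int N))"
    unfolding G H by (simp add: algebra_simps)
  also have "\<dots> = (- s) ^ Suc N * q ^ (Suc N choose 2) * (g 0 * h 1 - g 1 * h 0)"
    unfolding Suc c by (simp add: power_add algebra_simps)
  finally show ?case .
qed



lemma lag_aux:
  fixes a b :: "nat \<Rightarrow> 'a::field"
  assumes fin: "finite S" and p: "p \<in> S"
    and nz: "\<forall>j\<in>S. \<forall>m\<in>S. j \<noteq> m \<longrightarrow> a j * b m - a m * b j \<noteq> 0"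
  shows "(\<Sum>j\<in>S. (a j * b p - a p * b j) * T j / (\<Prod>m\<in>S - {j}. a j * b m - a m * b j))
       = (\<Sum>j\<in>S - {p}. T j / (\<Prod>m\<in>(S - {p}) - {j}. a j * b m - a m * b j))"
proof -
  have "(\<Sum>j\<in>S. (a j * b p - a p * b j) * T j / (\<Prod>m\<in>S - {j}. a j * b m - a m * b j))
      = (\<Sum>j\<in>S - {p}. (a j * b p - a p * b j) * T j / (\<Prod>m\<in>S - {j}. a j * b m - a m * b j))"
    using fin p by (subst sum.remove[of S p]) auto
  also have "\<dots> = (\<Sum>j\<in>S - {p}. T j / (\<Prod>m\<in>(S - {p}) - {j}. a j * b m - a m * b j))"
  proof (rule sum.cong[OF refl])
    fix j assume j: "j \<in> S - {p}"
    have "(\<Prod>m\<in>S - {j}. a j * b m - a m * b j) = (a j * b p - a p * b j) * (\<Prod>m\<in>(S - {j}) - {p}. a j * b m - a m * b j)"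
      using fin p j by (subst prod.remove[of "S - {j}" p]) auto
    moreover have "(S - {j}) - {p} = (S - {p}) - {j}" by blast
    moreover have "a j * b p - a p * b j \<noteq> 0" using nz j p by auto
    ultimately show "(a j * b p - a p * b j) * T j / (\<Prod>m\<in>S - {j}. a j * b m - a m * b j) = T j / (\<Prod>m\<in>(S - {p}) - {j}. a j * b m - a m * b j)"
      by simp
  qed
  finally show ?thesis .
qed

lemma lagrange_hom:
  fixes a b :: "nat \<Rightarrow> 'a::field"
  assumes "finite S" "card S = k + 2" "\<forall>j\<in>S. \<forall>m\<in>S. j \<noteq> m \<longrightarrow> a j * b m - a m * b j \<noteq> 0"
  shows "(\<Sum>j\<in>S. (a j * X + b j * Y) ^ k / (\<Prod>m\<in>S - {j}. a j * b m - a m * b j)) = 0"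
  using assms
proof (induction k arbitrary: S)
  case 0
  then have "card S = 2" by simp
  then obtain p r where S: "S = {p, r}" "p \<noteq> r" by (meson card_2_iff)
  have "1 / (a r * b p - a p * b r) = - (1 / (a p * b r - a r * b p))"
    by (metis divide_minus_right minus_diff_eq)
  moreover have "{p, r} - {p} = {r}" "{p, r} - {r} = {p}" using S by auto
  ultimately show ?case using S by simp
next
  case (Suc k)
  from Suc.prems have "S \<noteq> {}" by auto
  then obtain p where p: "p \<in> S" by blast
  have "card (S - {p}) = k + 2" using Suc.prems p by simp
  then have "S - {p} \<noteq> {}" by (metis card.empty nat.distinct(1) add_2_eq_Suc')
  then obtain r where r: "r \<in> S - {p}" by blast
  then have pr: "p \<in> S" "r \<in> S" "p \<noteq> r" using p by auto
  define D where "D = a p * b r - a r * b p"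
  have D: "D \<noteq> 0" using Suc.prems(3) pr unfolding D_def by auto
  define \<alpha> where "\<alpha> = - (X * a r + Y * b r) / D"
  define \<beta> where "\<beta> = (X * a p + Y * b p) / D"
  have dec: "a j * X + b j * Y = \<alpha> * (a j * b p - a p * b j) + \<beta> * (a j * b r - a r * b j)" for j
  proof -
    have Da: "D * \<alpha> = - (X * a r + Y * b r)" using D by (simp add: \<alpha>_def)
    have Db: "D * \<beta> = X * a p + Y * b p" using D by (simp add: \<beta>_def)
    have "D * (\<alpha> * (a j * b p - a p * b j) + \<beta> * (a j * b r - a r * b j))
        = (D * \<alpha>) * (a j * b p - a p * b j) + (D * \<beta>) * (a j * b r - a r * b j)"
      by (simp add: algebra_simps)
    also have "\<dots> = - (X * a r + Y * b r) * (a j * b p - a p * b j) + (X * a p + Y * b p) * (a j * b r - a r * b j)"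
      by (simp only: Da Db)
    also have "\<dots> = D * (a j * X + b j * Y)" unfolding D_def by (simp add: algebra_simps)
    finally show ?thesis using D by simp
  qed
  define T where "T j = (a j * X + b j * Y) ^ k" for j
  have IH: "(\<Sum>j\<in>S - {t}. T j / (\<Prod>m\<in>(S - {t}) - {j}. a j * b m - a m * b j)) = 0" if "t \<in> S" for t
    unfolding T_def
    by (rule Suc.IH) (use Suc.prems that in auto)
  have "(\<Sum>j\<in>S. (a j * X + b j * Y) ^ Suc k / (\<Prod>m\<in>S - {j}. a j * b m - a m * b j))
      = \<alpha> * (\<Sum>j\<in>S. (a j * b p - a p * b j) * T j / (\<Prod>m\<in>S - {j}. a j * b m - a m * b j))
      + \<beta> * (\<Sum>j\<in>S. (a j * b r - a r * b j) * T j / (\<Prod>m\<in>S - {j}. a j * b m - a m * b j))"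
    unfolding sum_distrib_left sum.distrib[symmetric]
  proof (rule sum.cong[OF refl])
    fix j
    have "(a j * X + b j * Y) ^ Suc k = (\<alpha> * (a j * b p - a p * b j) + \<beta> * (a j * b r - a r * b j)) * T j"
      by (simp only: power_Suc T_def dec)
    then show "(a j * X + b j * Y) ^ Suc k / (\<Prod>m\<in>S - {j}. a j * b m - a m * b j)
      = \<alpha> * ((a j * b p - a p * b j) * T j / (\<Prod>m\<in>S - {j}. a j * b m - a m * b j))
      + \<beta> * ((a j * b r - a r * b j) * T j / (\<Prod>m\<in>S - {j}. a j * b m - a m * b j))"
      by (simp add: distrib_right add_divide_distrib mult.assoc times_divide_eq_right)
  qed
  also have "\<dots> = 0"
    unfolding lag_aux[OF Suc.prems(1) pr(1) Suc.prems(3)] lag_aux[OF Suc.prems(1) pr(2) Suc.prems(3)]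
    using IH pr by simp
  finally show ?case .
qed



lemma c2: "2 * int (n choose 2) = int n * (int n - 1)"
proof (induction n)
  case 0 then show ?case by simp
next
  case (Suc n)
  have "Suc n choose 2 = (n choose 2) + n" by (simp add: choose_reduce_nat numeral_2_eq_2)
  then show ?case using Suc by (simp add: algebra_simps)
qed

lemma sum_ml: "(\<Sum>m=0..j. m * l) + l * (j choose 2) = j * j * (l::nat)"
proof (induction j)
  case 0 then show ?case by simp
next
  case (Suc j)
  have c: "Suc j choose 2 = (j choose 2) + j" by (simp add: choose_reduce_nat numeral_2_eq_2)
  have "(\<Sum>m=0..Suc j. m * l) + l * (Suc j choose 2) = ((\<Sum>m=0..j. m * l) + l * (j choose 2)) + (Suc j * l + l * j)"
    by (simp add: c algebra_simps)
  also have "\<dots> = j * j * l + (Suc j * l + l * j)" using Suc by simp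
  also have "\<dots> = Suc j * Suc j * l" by (simp add: algebra_simps)
  finally show ?case .
qed

lemma T_int:
  assumes l: "l > 0"
  shows "2 * int (l * (j choose 2) * ((4 * j + 1) * l - 3)) = int j * (int j - 1) * int l * ((4 * int j + 1) * int l - 3)"
proof (cases "j = 0")
  case True then show ?thesis by simp
next
  case False
  have "5 * 1 \<le> (4 * j + 1) * l" using False l by (intro mult_le_mono) auto
  then have "3 \<le> (4 * j + 1) * l" by simp
  then have X: "int ((4 * j + 1) * l - 3) = (4 * int j + 1) * int l - 3" by (simp add: of_nat_diff algebra_simps)
  have "2 * int (l * (j choose 2) * ((4 * j + 1) * l - 3)) = int l * (2 * int (j choose 2)) * int ((4 * j + 1) * l - 3)"
    by (simp only: of_nat_mult mult_ac)
  also have "\<dots> = int l * (int j * (int j - 1)) * ((4 * int j + 1) * int l - 3)"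
    by (simp only: c2 X)
  finally show ?thesis by (simp add: algebra_simps)
qed

lemma sum_choose_aux:
  assumes l: "l > 0"
  shows "6 * (\<Sum>m=0..j. (m * l) choose 2) + l * (j choose 2) * ((4 * j + 1) * l - 3) = 6 * (j * ((j * l) choose 2))"
proof (induction j)
  case 0 then show ?case by simp
next
  case (Suc j)
  define T where "T j = l * (j choose 2) * ((4 * j + 1) * l - 3)" for j
  define J where "J j = j * ((j * l) choose 2)" for j
  have key: "6 * J j + 6 * ((Suc j * l) choose 2) + T (Suc j) = 6 * J (Suc j) + T j"
  proof -
    have "2 * int (6 * J j + 6 * ((Suc j * l) choose 2) + T (Suc j)) = 2 * int (6 * J (Suc j) + T j)"
    proof -
      have a: "2 * int (T j) = int j * (int j - 1) * int l * ((4 * int j + 1) * int l - 3)"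
        unfolding T_def by (rule T_int[OF l])
      have b: "2 * int (T (Suc j)) = (int j + 1) * int j * int l * ((4 * (int j + 1) + 1) * int l - 3)"
        unfolding T_def using T_int[OF l, of "Suc j"] by (simp add: add.commute)
      have c: "2 * int (J j) = int j * (int j * int l * (int j * int l - 1))"
      proof -
        have "2 * int (J j) = int j * (2 * int ((j * l) choose 2))" unfolding J_def by simp
        then show ?thesis unfolding c2 by simp
      qed
      have d: "2 * int (J (Suc j)) = (int j + 1) * ((int j + 1) * int l * ((int j + 1) * int l - 1))"
      proof -
        have "2 * int (J (Suc j)) = int (Suc j) * (2 * int ((Suc j * l) choose 2))" unfolding J_def by (simp only: of_nat_mult mult.left_commute)
        then show ?thesis unfolding c2 by (simp add: algebra_simps)
      qed
      have e: "2 * int ((Suc j * l) choose 2) = (int j + 1) * int l * ((int j + 1) * int l - 1)"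
        unfolding c2 by (simp add: algebra_simps)
      have "2 * int (6 * J j + 6 * ((Suc j * l) choose 2) + T (Suc j))
          = 6 * (2 * int (J j)) + 6 * (2 * int ((Suc j * l) choose 2)) + 2 * int (T (Suc j))" by simp
      also have "\<dots> = 6 * (2 * int (J (Suc j))) + 2 * int (T j)"
        unfolding a b c d e by (simp add: algebra_simps)
      also have "\<dots> = 2 * int (6 * J (Suc j) + T j)" by simp
      finally show ?thesis .
    qed
    then show ?thesis by (simp only: mult_cancel_left of_nat_eq_iff) simp
  qed
  have "6 * (\<Sum>m=0..Suc j. (m * l) choose 2) + T (Suc j) = (6 * (\<Sum>m=0..j. (m * l) choose 2) + T j) + (6 * ((Suc j * l) choose 2) + T (Suc j)) - T j"
    by simp
  also have "\<dots> = 6 * J j + (6 * ((Suc j * l) choose 2) + T (Suc j)) - T j"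
    using Suc unfolding T_def J_def by simp
  also have "\<dots> = 6 * J (Suc j)" using key by simp
  finally show ?case unfolding T_def J_def .
qed

lemma sum_choose:
  assumes l: "l > 0"
  shows "(\<Sum>m=0..j. (m * l) choose 2) + (l * (j choose 2) * ((4 * j + 1) * l - 3)) div 6 = j * ((j * l) choose 2)"
proof -
  have gen: "S + T div 6 = J" if h: "6 * S + T = 6 * J" for S T J :: nat
  proof -
    have SJ: "S \<le> J" using h by linarith
    have "T = 6 * J - 6 * S" using h by linarith
    also have "\<dots> = 6 * (J - S)" by (simp only: diff_mult_distrib2)
    finally have "T div 6 = J - S" by simp
    then show ?thesis using SJ by simp
  qed
  show ?thesis by (rule gen[OF sum_choose_aux[OF l, of j]])
qed



lemma sign_lemma:
  fixes q s :: "'a::field"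
  assumes l: "l > 0"
  shows "(-1) ^ (j + l * (j choose 2)) * (q ^ ((l * (j choose 2) * ((4 * j + 1) * l - 3)) div 6) * s ^ (l * (j choose 2)))
         * (\<Prod>m=0..j. (- s) ^ (m * l) * q ^ ((m * l) choose 2))
       = (-1) ^ j * ((- s) ^ (j * l) * q ^ ((j * l) choose 2)) ^ j"
proof -
  define E where "E = (l * (j choose 2) * ((4 * j + 1) * l - 3)) div 6"
  define C where "C = l * (j choose 2)"
  have P: "(\<Prod>m=0..j. (- s) ^ (m * l) * q ^ ((m * l) choose 2)) = (- s) ^ (\<Sum>m=0..j. m * l) * q ^ (\<Sum>m=0..j. (m * l) choose 2)"
    by (simp add: prod.distrib power_sum)
  have e1: "(\<Sum>m=0..j. m * l) + C = j * j * l" unfolding C_def by (rule sum_ml)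
  have e2: "(\<Sum>m=0..j. (m * l) choose 2) + E = j * ((j * l) choose 2)" unfolding E_def by (rule sum_choose[OF l])
  have "(-1) ^ (j + C) * (q ^ E * s ^ C) * ((- s) ^ (\<Sum>m=0..j. m * l) * q ^ (\<Sum>m=0..j. (m * l) choose 2))
      = (-1) ^ j * (((-1) ^ C * s ^ C) * (- s) ^ (\<Sum>m=0..j. m * l)) * (q ^ E * q ^ (\<Sum>m=0..j. (m * l) choose 2))"
    by (simp add: power_add mult_ac)
  also have "((-1) ^ C * s ^ C) = (- s) ^ C" by (simp add: power_mult_distrib[symmetric])
  also have "(- s) ^ C * (- s) ^ (\<Sum>m=0..j. m * l) = (- s) ^ (j * j * l)"
    by (simp add: power_add[symmetric] e1[symmetric] add.commute)
  also have "q ^ E * q ^ (\<Sum>m=0..j. (m * l) choose 2) = q ^ (j * ((j * l) choose 2))"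
    by (simp add: power_add[symmetric] e2[symmetric] add.commute)
  also have "(-1) ^ j * (- s) ^ (j * j * l) * q ^ (j * ((j * l) choose 2)) = (-1) ^ j * ((- s) ^ (j * l) * q ^ ((j * l) choose 2)) ^ j"
    by (simp add: power_mult_distrib power_mult[symmetric] mult_ac)
  finally show ?thesis unfolding P E_def C_def .
qed



lemma final_alg:
  fixes c N U P1 P2 Wl Wr v sj z :: "'a::field"
  assumes "P1 \<noteq> 0" "P2 \<noteq> 0" "Wl \<noteq> 0" "Wr \<noteq> 0" "v \<noteq> 0" "z \<noteq> 0"
    and Z: "c * Wl = sj * v"
  shows "c * (N / (P1 * P2)) * U = N * (sj * z) / (Wl * Wr) * (U / ((P1 / v) * (z * (P2 / Wr))))"
proof -
  have c: "c = sj * v / Wl" using Z assms(3) by (simp add: field_simps)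
  show ?thesis unfolding c using assms(1-6) by (simp add: field_simps)
qed

theorem generic:
  fixes q x s :: "'a::field" and k l :: nat and n :: int
  assumes q: "q \<noteq> 0" and s: "s \<noteq> 0" and l: "l > 0"
    and NZ: "\<And>a m. m > 0 \<Longrightarrow> carlitz_f q (int m) x (q ^ a * s) \<noteq> 0"
  shows "(\<Sum>j=0..k+1.
            (-1) ^ (j + l * (j choose 2)) *
            (q ^ ((l * (j choose 2) * ((4 * j + 1) * l - 3)) div 6) * s ^ (l * (j choose 2))) *
            carlitz_bracket q (k + 1) j x s l *
            carlitz_f q (n - int (j * l)) x (q ^ (j * l) * s) ^ k) = 0"
proof -
  define F where "F t m = carlitz_f q m x t" for t m
  define u where "u j m = F (q ^ (j * l) * s) (m - int (j * l))" for j m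
  define w where "w m = (- s) ^ (m * l) * q ^ ((m * l) choose 2)" for m
  define A where "A j = u j 1" for j
  define B where "B j = u j 0" for j
  define d where "d j m = A j * B m - A m * B j" for j m
  define E where "E = sol q x s 1 0"
  have sq: "q ^ a * s \<noteq> 0" for a using q s by simp
  have rec: "rec_sol q x s (u j)" for j
    unfolding u_def F_def by (rule rec_sol_shift[OF q carlitz_rec[OF q sq]])
  have basis: "u j m = A j * F s m + B j * E m" for j m
    unfolding A_def B_def E_def F_def by (rule rec_sol_basis[OF q s rec])
  have wnz: "w m \<noteq> 0" for m using q s unfolding w_def by simp
  have Fnz: "F (q ^ a * s) (int m) \<noteq> 0" if "m > 0" for a m
    unfolding F_def using NZ[OF that] .
  have dlt: "d j m = - F (q ^ (j * l) * s) (int ((m - j) * l)) / w m" if jm: "j < m" for j m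
  proof -
    have c: "u j (int (m * l)) * u m (int (m * l) + 1) - u j (int (m * l) + 1) * u m (int (m * l))
      = (- s) ^ (m * l) * q ^ ((m * l) choose 2) * (u j 0 * u m 1 - u j 1 * u m 0)"
      by (rule cas[OF rec rec])
    have u0: "u m (int (m * l)) = 0" unfolding u_def F_def using carlitz_01[OF q sq] by simp
    have u1: "u m (int (m * l) + 1) = 1" unfolding u_def F_def using carlitz_01[OF q sq] by simp
    have "int (m * l) - int (j * l) = int ((m - j) * l)" using jm by (simp add: of_nat_diff diff_mult_distrib)
    then have uj: "u j (int (m * l)) = F (q ^ (j * l) * s) (int ((m - j) * l))" unfolding u_def by simp
    from c have "F (q ^ (j * l) * s) (int ((m - j) * l)) = - (w m * d j m)"
      unfolding u0 u1 uj w_def d_def A_def B_def by (simp add: algebra_simps)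
    then show ?thesis using wnz[of m] by (simp add: field_simps)
  qed
  have dgt: "d j m = F (q ^ (m * l) * s) (int ((j - m) * l)) / w j" if jm: "m < j" for j m
  proof -
    have "d j m = - d m j" unfolding d_def by simp
    then show ?thesis using dlt[OF jm] by simp
  qed
  define S where "S = {0..k+1}"
  have dnz: "\<forall>j\<in>S. \<forall>m\<in>S. j \<noteq> m \<longrightarrow> A j * B m - A m * B j \<noteq> 0"
  proof (intro ballI impI)
    fix j m assume "j \<in> S" "m \<in> S" "j \<noteq> m"
    then consider "j < m" | "m < j" by linarith
    then show "A j * B m - A m * B j \<noteq> 0"
    proof cases
      case 1
      then have "(m - j) * l > 0" using l by simp
      then have f: "F (q ^ (j * l) * s) (int ((m - j) * l)) \<noteq> 0" by (rule Fnz)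
      have "d j m \<noteq> 0" unfolding dlt[OF 1] using f wnz[of m] by (simp only: divide_eq_0_iff neg_equal_0_iff_equal) simp
      then show ?thesis unfolding d_def .
    next
      case 2
      then have "(j - m) * l > 0" using l by simp
      then have f: "F (q ^ (m * l) * s) (int ((j - m) * l)) \<noteq> 0" by (rule Fnz)
      have "d j m \<noteq> 0" unfolding dgt[OF 2] using f wnz[of j] by (simp only: divide_eq_0_iff) simp
      then show ?thesis unfolding d_def .
    qed
  qed
  have L: "(\<Sum>j\<in>S. (A j * F s n + B j * E n) ^ k / (\<Prod>m\<in>S - {j}. A j * B m - A m * B j)) = 0"
    by (rule lagrange_hom) (use dnz in \<open>auto simp: S_def\<close>)
  then have L': "(\<Sum>j\<in>S. u j n ^ k / (\<Prod>m\<in>S - {j}. d j m)) = 0"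
    unfolding basis d_def .
  define Num where "Num = (\<Prod>i=1..k+1. F s (int (i * l)))"
  define W where "W = (\<Prod>m=0..k+1. w m)"
  define K where "K = Num * (-1) ^ (k + 1) / W"
  have tm: "(-1) ^ (j + l * (j choose 2)) *
            (q ^ ((l * (j choose 2) * ((4 * j + 1) * l - 3)) div 6) * s ^ (l * (j choose 2))) *
            carlitz_bracket q (k + 1) j x s l * u j n ^ k
          = K * (u j n ^ k / (\<Prod>m\<in>S - {j}. d j m))" if jS: "j \<in> S" for j
  proof -
    have jk: "j \<le> k + 1" using jS unfolding S_def by simp
    define P1 where "P1 = (\<Prod>m\<in>{0..<j}. F (q ^ (m * l) * s) (int ((j - m) * l)))"
    define P2 where "P2 = (\<Prod>m\<in>{j+1..k+1}. F (q ^ (j * l) * s) (int ((m - j) * l)))"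
    define Wl where "Wl = (\<Prod>m=0..j. w m)"
    define Wr where "Wr = (\<Prod>m\<in>{j+1..k+1}. w m)"
    have P1': "(\<Prod>i=1..j. carlitz_f q (int (i * l)) x (q ^ ((j - i) * l) * s)) = P1"
      unfolding P1_def F_def
      by (rule prod.reindex_bij_witness[of _ "\<lambda>i. j - i" "\<lambda>m. j - m"]) auto
    have P2': "(\<Prod>i=1..k + 1 - j. carlitz_f q (int (i * l)) x (q ^ (j * l) * s)) = P2"
      unfolding P2_def F_def
      by (rule prod.reindex_bij_witness[of _ "\<lambda>m. m - j" "\<lambda>i. i + j"]) auto
    have br: "carlitz_bracket q (k + 1) j x s l = Num / (P1 * P2)"
      unfolding carlitz_bracket_def P1' P2' Num_def F_def ..
    have "\<forall>m\<in>{0..<j}. F (q ^ (m * l) * s) (int ((j - m) * l)) \<noteq> 0"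
      by (rule ballI, rule Fnz) (use l in auto)
    then have P1nz: "P1 \<noteq> 0" unfolding P1_def by (subst prod_zero_iff) auto
    have "\<forall>m\<in>{j+1..k+1}. F (q ^ (j * l) * s) (int ((m - j) * l)) \<noteq> 0"
      by (rule ballI, rule Fnz) (use l in auto)
    then have P2nz: "P2 \<noteq> 0" unfolding P2_def by (subst prod_zero_iff) auto
    have Wlnz: "Wl \<noteq> 0" unfolding Wl_def using wnz by (subst prod_zero_iff) auto
    have Wrnz: "Wr \<noteq> 0" unfolding Wr_def using wnz by (subst prod_zero_iff) auto
    have Wsplit: "W = Wl * Wr"
    proof -
      have "{0..k+1} = {0..j} \<union> {j+1..k+1}" using jk by auto
      then show ?thesis unfolding W_def Wl_def Wr_def by (subst prod.union_disjoint[symmetric]) auto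
    qed
    have Ssplit: "S - {j} = {0..<j} \<union> {j+1..k+1}" using jk unfolding S_def by auto
    have D1: "(\<Prod>m\<in>{0..<j}. d j m) = P1 / w j ^ j"
    proof -
      have "(\<Prod>m\<in>{0..<j}. d j m) = (\<Prod>m\<in>{0..<j}. F (q ^ (m * l) * s) (int ((j - m) * l)) / w j)"
        by (rule prod.cong) (auto simp: dgt)
      also have "\<dots> = P1 / w j ^ j" unfolding P1_def by (simp add: prod_dividef)
      finally show ?thesis .
    qed
    have D2: "(\<Prod>m\<in>{j+1..k+1}. d j m) = (-1) ^ (k + 1 - j) * (P2 / Wr)"
    proof -
      have "(\<Prod>m\<in>{j+1..k+1}. d j m) = (\<Prod>m\<in>{j+1..k+1}. (-1) * (F (q ^ (j * l) * s) (int ((m - j) * l)) / w m))"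
        by (rule prod.cong) (auto simp: dlt)
      also have "\<dots> = (-1) ^ (k + 1 - j) * (P2 / Wr)"
        unfolding P2_def Wr_def prod.distrib by (simp add: prod_dividef)
      finally show ?thesis .
    qed
    have Dall: "(\<Prod>m\<in>S - {j}. d j m) = (P1 / w j ^ j) * ((-1) ^ (k + 1 - j) * (P2 / Wr))"
    proof -
      have "(\<Prod>m\<in>{0..<j} \<union> {j+1..k+1}. d j m) = (\<Prod>m\<in>{0..<j}. d j m) * (\<Prod>m\<in>{j+1..k+1}. d j m)"
        by (rule prod.union_disjoint) auto
      then show ?thesis unfolding Ssplit D1 D2 .
    qed
    have sgn: "(-1) ^ (k + 1) = ((-1) ^ j * (-1) ^ (k + 1 - j) :: 'a)"
      using jk by (simp add: power_add[symmetric])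
    have Z: "(-1) ^ (j + l * (j choose 2)) * (q ^ ((l * (j choose 2) * ((4 * j + 1) * l - 3)) div 6) * s ^ (l * (j choose 2))) * Wl
        = (-1) ^ j * w j ^ j"
      unfolding Wl_def w_def by (rule sign_lemma[OF l])
    show ?thesis
      unfolding br Dall K_def Wsplit sgn
      by (rule final_alg[OF P1nz P2nz Wlnz Wrnz _ _ Z]) (use wnz in auto)
  qed
  have "(\<Sum>j=0..k+1.
            (-1) ^ (j + l * (j choose 2)) *
            (q ^ ((l * (j choose 2) * ((4 * j + 1) * l - 3)) div 6) * s ^ (l * (j choose 2))) *
            carlitz_bracket q (k + 1) j x s l *
            carlitz_f q (n - int (j * l)) x (q ^ (j * l) * s) ^ k)
      = (\<Sum>j\<in>S. K * (u j n ^ k / (\<Prod>m\<in>S - {j}. d j m)))"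
  proof (rule sum.cong)
    show "{0..k+1} = S" by (simp add: S_def)
  next
    fix j assume jS: "j \<in> S"
    have "carlitz_f q (n - int (j * l)) x (q ^ (j * l) * s) = u j n" by (simp add: u_def F_def)
    then show "(-1) ^ (j + l * (j choose 2)) *
            (q ^ ((l * (j choose 2) * ((4 * j + 1) * l - 3)) div 6) * s ^ (l * (j choose 2))) *
            carlitz_bracket q (k + 1) j x s l *
            carlitz_f q (n - int (j * l)) x (q ^ (j * l) * s) ^ k
          = K * (u j n ^ k / (\<Prod>m\<in>S - {j}. d j m))" using tm[OF jS] by simp
  qed
  also have "\<dots> = K * 0" unfolding sum_distrib_left[symmetric] L' ..
  finally show ?thesis by simp
qed



definition emb :: "int poly poly poly \<Rightarrow> rf" where "emb p = Fract p 1"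

lemma emb_add: "emb (a + b) = emb a + emb b" unfolding emb_def by simp
lemma emb_mult: "emb (a * b) = emb a * emb b" unfolding emb_def by simp
lemma emb_one: "emb 1 = 1" unfolding emb_def by (simp add: One_fract_def)
lemma emb_zero: "emb 0 = 0" unfolding emb_def by (simp add: Zero_fract_def)
lemma emb_pow: "emb (a ^ n) = emb a ^ n"
  by (induction n) (simp_all add: emb_one emb_mult)
lemma emb_eq0: "emb a = 0 \<longleftrightarrow> a = 0"
  unfolding emb_def Zero_fract_def by (simp add: eq_fract)

definition QQ :: "int poly poly poly" where "QQ = [:0, 1:]"
definition SS :: "int poly poly poly" where "SS = [:[:0, 1:]:]"
definition XX :: "int poly poly poly" where "XX = [:[:[:0, 1:]:]:]"

lemma qv_emb: "qv = emb QQ" unfolding qv_def emb_def QQ_def ..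
lemma sv_emb: "sv = emb SS" unfolding sv_def emb_def SS_def ..
lemma xv_emb: "xv = emb XX" unfolding xv_def emb_def XX_def ..

lemma qv_nz: "qv \<noteq> 0" unfolding qv_emb emb_eq0 QQ_def by simp
lemma sv_nz: "sv \<noteq> 0" unfolding sv_emb emb_eq0 SS_def by simp

lemma poly_nz: "XX ^ m + SS * P \<noteq> 0"
proof
  assume "XX ^ m + SS * P = 0"
  then have "poly (poly (XX ^ m + SS * P) 0) 0 = 0" by simp
  moreover have "poly (poly (XX ^ m + SS * P) 0) 0 = [:0, 1:] ^ m"
    by (simp add: XX_def SS_def poly_power)
  ultimately show False by simp
qed

lemma carlitz_form:
  fixes a :: nat
  shows "(\<exists>P. carlitz_f qv (int (Suc m)) xv (qv ^ a * sv) = emb (XX ^ m + SS * P)) \<and>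
         (\<exists>P. carlitz_f qv (int (Suc (Suc m))) xv (qv ^ a * sv) = emb (XX ^ Suc m + SS * P))"
proof (induction m)
  have sq: "qv ^ a * sv \<noteq> 0" using qv_nz sv_nz by simp
  case 0
  have f1: "carlitz_f qv 1 xv (qv ^ a * sv) = 1" by (rule carlitz_01(2)[OF qv_nz sq])
  have f0: "carlitz_f qv 0 xv (qv ^ a * sv) = 0" by (rule carlitz_01(1)[OF qv_nz sq])
  have f2: "carlitz_f qv 2 xv (qv ^ a * sv) = xv"
    using rec_solD[OF carlitz_rec[OF qv_nz sq], of 2] f1 f0 by simp
  show ?case
  proof
    show "\<exists>P. carlitz_f qv (int (Suc 0)) xv (qv ^ a * sv) = emb (XX ^ 0 + SS * P)"
      by (rule exI[of _ 0]) (simp add: f1 emb_one)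
    show "\<exists>P. carlitz_f qv (int (Suc (Suc 0))) xv (qv ^ a * sv) = emb (XX ^ Suc 0 + SS * P)"
      by (rule exI[of _ 0]) (use f2 in \<open>simp add: xv_emb\<close>)
  qed
next
  have sq: "qv ^ a * sv \<noteq> 0" using qv_nz sv_nz by simp
  case (Suc m)
  from Suc obtain P0 P1 where
    h0: "carlitz_f qv (int (Suc m)) xv (qv ^ a * sv) = emb (XX ^ m + SS * P0)" and
    h1: "carlitz_f qv (int (Suc (Suc m))) xv (qv ^ a * sv) = emb (XX ^ Suc m + SS * P1)" by blast
  have r: "carlitz_f qv (int (Suc (Suc (Suc m)))) xv (qv ^ a * sv)
      = xv * carlitz_f qv (int (Suc (Suc m))) xv (qv ^ a * sv) + qv powi (int (Suc m)) * (qv ^ a * sv) * carlitz_f qv (int (Suc m)) xv (qv ^ a * sv)"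
  proof -
    have "int (Suc (Suc (Suc m))) - 1 = int (Suc (Suc m))" "int (Suc (Suc (Suc m))) - 2 = int (Suc m)" by simp_all
    then show ?thesis using rec_solD[OF carlitz_rec[OF qv_nz sq], of "int (Suc (Suc (Suc m)))"] by simp
  qed
  also have "\<dots> = emb (XX ^ Suc (Suc m) + SS * (XX * P1 + QQ ^ Suc m * QQ ^ a * (XX ^ m + SS * P0)))"
    unfolding h0 h1 unfolding power_int_of_nat xv_emb qv_emb sv_emb
    by (simp add: emb_add emb_mult emb_pow algebra_simps)
  finally show ?case using Suc by blast
qed

lemma NZ_rf: "m > 0 \<Longrightarrow> carlitz_f qv (int m) xv (qv ^ a * sv) \<noteq> 0"
proof -
  assume "m > 0"
  then obtain m' where m: "m = Suc m'" by (cases m) auto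
  obtain P where "carlitz_f qv (int (Suc m')) xv (qv ^ a * sv) = emb (XX ^ m' + SS * P)"
    using carlitz_form[of m' a] by blast
  then show ?thesis unfolding m using poly_nz[of m' P] by (simp add: emb_eq0)
qed

theorem theorem3:
  fixes k l :: nat and n :: int
  assumes "k > 0" and "l > 0"
  shows "(\<Sum>j=0..k+1.
            (-1) ^ (j + l * (j choose 2)) *
            (qv ^ ((l * (j choose 2) * ((4 * j + 1) * l - 3)) div 6) * sv ^ (l * (j choose 2))) *
            carlitz_bracket qv (k + 1) j xv sv l *
            carlitz_f qv (n - int (j * l)) xv (qv ^ (j * l) * sv) ^ k) = (0::rf)"
  by (rule generic[OF qv_nz sv_nz assms(2) NZ_rf])

end
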